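(* Let $M$ be a smooth manifold and $g_1,g_2$ Riemannian metrics on $M$. For $p\in M$ write $\|\cdot\|_i^{(p)}$ for the norm on $T_pM$ induced by $(g_i)_p$. The following are equivalent: (1) $g_1$ and $g_2$ are roughly conformal, i.e. there is a function (not necessarily continuous) $h:M\to(0,\infty)$ with $(g_2)_p=h(p)(g_1)_p$ for every $p\in M$; (2) there is a function (not necessarily continuous) $f:M\to(0,\infty)$ such that $\|\cdot\|_1^{(p)}=f(p)\|\cdot\|_2^{(p)}$ on $T_pM$ for each $p\in M$; (3) for each $p\in M$, $(g_1)_p$ and $(g_2)_p$ give the same angle between every pair of nonzero vectors in $T_pM$; (4) for each $p\in M$ and all nonzero $v,w\in T_pM$, $(g_1)_p(v,w)=0\iff(g_2)_p(v,w)=0$; (5) for each $p\in M$ there is $\theta_0\in(0,\pi)$ such that for all nonzero $v,w\in T_pM$, the angle between $v,w$ with respect to $(g_1)_p$ is $\theta_0$ iff the angle between them with respect to $(g_2)_p$ is $\theta_0$.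
   Context: For an inner product $g$ on a real vector space, the angle between nonzero vectors $v,w$ is the unique $\theta\in[0,\pi]$ with $\cos\theta=g(v,w)/(\sqrt{g(v,v)}\sqrt{g(w,w)})$. *)

theory Defs
  imports "HOL-Analysis.Analysis"
begin

definition inner_product_on :: "('v::real_vector \<Rightarrow> 'v \<Rightarrow> real) \<Rightarrow> bool" where
  "inner_product_on g \<longleftrightarrow>
     (\<forall>v. linear (g v)) \<and> (\<forall>v w. g v w = g w v) \<and> (\<forall>v. v \<noteq> 0 \<longrightarrow> g v v > 0)"

definition ip_norm :: "('v \<Rightarrow> 'v \<Rightarrow> real) \<Rightarrow> 'v \<Rightarrow> real" where
  "ip_norm g v = sqrt (g v v)"

definition ip_angle :: "('v \<Rightarrow> 'v \<Rightarrow> real) \<Rightarrow> 'v \<Rightarrow> 'v \<Rightarrow> real" where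
  "ip_angle g v w = arccos (g v w / (sqrt (g v v) * sqrt (g w w)))"

text \<open>A (pointwise) Riemannian metric on a manifold whose points form the type 'm and whose
  tangent spaces T_pM are identified with the finite-dimensional space 'v.\<close>
definition pointwise_metric :: "('m \<Rightarrow> 'v::real_vector \<Rightarrow> 'v \<Rightarrow> real) \<Rightarrow> bool" where
  "pointwise_metric g \<longleftrightarrow> (\<forall>p. inner_product_on (g p))"

end

theory Submission
  imports Defs
begin


context
  fixes g :: "'v::real_vector \<Rightarrow> 'v \<Rightarrow> real"
  assumes ip: "inner_product_on g"
begin

lemma lin2: "linear (g v)" using ip unfolding inner_product_on_def by blast
lemma symm: "g v w = g w v" using ip unfolding inner_product_on_def by blast
lemma posd: "v \<noteq> 0 \<Longrightarrow> g v v > 0" using ip unfolding inner_product_on_def by blast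

lemma r_add: "g v (w1 + w2) = g v w1 + g v w2" using linear_add[OF lin2] by simp
lemma r_diff: "g v (w1 - w2) = g v w1 - g v w2" using linear_diff[OF lin2] by simp
lemma r_scale: "g v (a *\<^sub>R w) = a * g v w" using linear_cmul[OF lin2] by simp
lemma r_0: "g v 0 = 0" using linear_0[OF lin2] by simp
lemma l_add: "g (w1 + w2) v = g w1 v + g w2 v" using r_add symm by metis
lemma l_diff: "g (w1 - w2) v = g w1 v - g w2 v" using r_diff symm by metis
lemma l_scale: "g (a *\<^sub>R w) v = a * g w v" using r_scale symm by metis
lemma l_0: "g 0 v = 0" using r_0 symm by metis
lemma r_neg: "g v (- w) = - g v w" using r_diff[of v 0 w] r_0 by simp
lemma l_neg: "g (- w) v = - g w v" using r_neg symm by metis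
lemma nonneg: "g v v \<ge> 0" using posd[of v] l_0 by (cases "v = 0") auto

lemmas ipsimps = r_add r_diff r_scale r_0 l_add l_diff l_scale l_0

lemma polar: "g v w = (g (v+w) (v+w) - g v v - g w w) / 2"
  by (simp add: ipsimps symm[of w v])

lemma cs_sq: "(g v w)^2 \<le> g v v * g w w"
proof (cases "w = 0")
  case True then show ?thesis by (simp add: r_0)
next
  case False
  hence pw: "g w w > 0" by (rule posd)
  define t where "t = g v w / g w w"
  have "0 \<le> g (v - t *\<^sub>R w) (v - t *\<^sub>R w)" by (rule nonneg)
  also have "\<dots> = g v v - 2*t*g v w + t^2 * g w w"
    by (simp add: ipsimps symm[of w v] power2_eq_square algebra_simps)
  also have "\<dots> = g v v - (g v w)^2 / g w w"
    using pw by (simp add: t_def power2_eq_square field_simps)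
  finally have "(g v w)^2 / g w w \<le> g v v" by simp
  thus ?thesis using pw by (simp add: field_simps)
qed

lemma cs_ratio: "\<bar>g v w / (sqrt (g v v) * sqrt (g w w))\<bar> \<le> 1"
proof -
  have "\<bar>g v w\<bar> \<le> sqrt (g v v) * sqrt (g w w)"
  proof -
    have "\<bar>g v w\<bar> = sqrt ((g v w)^2)" by simp
    also have "\<dots> \<le> sqrt (g v v * g w w)" using cs_sq real_sqrt_le_mono by blast
    finally show ?thesis by (simp add: real_sqrt_mult)
  qed
  moreover have "sqrt (g v v) * sqrt (g w w) \<ge> 0" using nonneg by simp
  ultimately show ?thesis
  proof (cases "sqrt (g v v) * sqrt (g w w) = 0")
    case False
    assume a: "\<bar>g v w\<bar> \<le> sqrt (g v v) * sqrt (g w w)" "sqrt (g v v) * sqrt (g w w) \<ge> 0"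
    hence pos: "sqrt (g v v) * sqrt (g w w) > 0" using False by linarith
    have "\<bar>g v w / (sqrt (g v v) * sqrt (g w w))\<bar> = \<bar>g v w\<bar> / (sqrt (g v v) * sqrt (g w w))"
      using pos by (simp add: abs_divide)
    also have "\<dots> \<le> 1" using pos a by (simp add: divide_le_eq_1)
    finally show ?thesis .
  qed simp
qed

lemma angle_eq:
  assumes "0 \<le> \<theta>" "\<theta> \<le> pi"
  shows "ip_angle g v w = \<theta> \<longleftrightarrow> g v w / (sqrt (g v v) * sqrt (g w w)) = cos \<theta>"
proof
  let ?r = "g v w / (sqrt (g v v) * sqrt (g w w))"
  assume "ip_angle g v w = \<theta>"
  hence "cos (arccos ?r) = cos \<theta>" unfolding ip_angle_def by simp
  moreover have "cos (arccos ?r) = ?r" using cs_ratio[of v w] using cs_ratio[of v w] unfolding abs_le_iff by (intro cos_arccos) linarith+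
  ultimately show "?r = cos \<theta>" by simp
next
  assume "g v w / (sqrt (g v v) * sqrt (g w w)) = cos \<theta>"
  thus "ip_angle g v w = \<theta>" unfolding ip_angle_def using arccos_cos assms by metis
qed

lemma angle_perp:
  assumes "v \<noteq> 0" "w \<noteq> 0"
  shows "ip_angle g v w = pi/2 \<longleftrightarrow> g v w = 0"
proof -
  have "sqrt (g v v) > 0" "sqrt (g w w) > 0" using posd assms by auto
  thus ?thesis using angle_eq[of "pi/2" v w] by simp
qed

end



lemma prop_from_diag:
  assumes ip1: "inner_product_on g1" and ip2: "inner_product_on g2"
    and d: "\<And>v. g2 v v = h * g1 v v"
  shows "g2 v w = h * g1 v w"
proof -
  have "g2 v w = (g2 (v+w) (v+w) - g2 v v - g2 w w) / 2" by (rule polar[OF ip2])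
  also have "\<dots> = (h * g1 (v+w) (v+w) - h * g1 v v - h * g1 w w) / 2" by (simp only: d)
  also have "\<dots> = h * ((g1 (v+w) (v+w) - g1 v v - g1 w w) / 2)" by (simp add: algebra_simps)
  also have "\<dots> = h * g1 v w" by (simp only: polar[OF ip1, of v w, symmetric])
  finally show ?thesis .
qed

lemma unit_scale:
  assumes ip: "inner_product_on g" and v: "v \<noteq> 0"
  shows "g ((1/sqrt (g v v)) *\<^sub>R v) ((1/sqrt (g v v)) *\<^sub>R v) = 1"
proof -
  have p: "g v v > 0" using posd[OF ip v] .
  have "g ((1/sqrt (g v v)) *\<^sub>R v) ((1/sqrt (g v v)) *\<^sub>R v) = (1/sqrt (g v v))^2 * g v v"
    by (simp add: ipsimps[OF ip] power2_eq_square)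
  also have "\<dots> = 1" using p by (simp add: power_divide)
  finally show ?thesis .
qed

lemma nz_of_pos: "inner_product_on g \<Longrightarrow> g x x \<noteq> 0 \<Longrightarrow> x \<noteq> 0"
  using l_0 by metis

lemma perp_to_prop:
  fixes g1 g2 :: "'v::euclidean_space \<Rightarrow> 'v \<Rightarrow> real"
  assumes ip1: "inner_product_on g1" and ip2: "inner_product_on g2"
    and C4: "\<forall>v w. v \<noteq> 0 \<longrightarrow> w \<noteq> 0 \<longrightarrow> (g1 v w = 0 \<longleftrightarrow> g2 v w = 0)"
  shows "\<exists>h>0. \<forall>v w. g2 v w = h * g1 v w"
proof -
  have unit: "g2 u u = g2 v v" if "g1 u u = 1" "g1 v v = 1" for u v
  proof (cases "u + v = 0 \<or> u - v = 0")
    case True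
    then consider "v = -u" | "v = u" by (metis add_eq_0_iff eq_iff_diff_eq_0)
    then show ?thesis
    proof cases
      case 1
      show ?thesis using 1 by (simp add: l_neg[OF ip2] r_neg[OF ip2])
    qed simp
  next
    case False
    have "g1 (u+v) (u-v) = 0" using that by (simp add: ipsimps[OF ip1] symm[OF ip1, of v u])
    hence "g2 (u+v) (u-v) = 0" using C4 False by blast
    thus ?thesis by (simp add: ipsimps[OF ip2] symm[OF ip2, of v u])
  qed
  define k where "k v = g2 v v / g1 v v" for v
  have keq: "k u = k v" if "u \<noteq> 0" "v \<noteq> 0" for u v
  proof -
    have ksc: "k x = g2 ((1/sqrt (g1 x x)) *\<^sub>R x) ((1/sqrt (g1 x x)) *\<^sub>R x)" if "x \<noteq> 0" for x
    proof -
      have p: "g1 x x > 0" using posd[OF ip1 that] .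
      have "g2 ((1/sqrt (g1 x x)) *\<^sub>R x) ((1/sqrt (g1 x x)) *\<^sub>R x) = (1/sqrt (g1 x x))^2 * g2 x x"
        by (simp add: ipsimps[OF ip2] power2_eq_square)
      also have "\<dots> = k x" using p by (simp add: power_divide k_def)
      finally show ?thesis by simp
    qed
    show ?thesis using ksc[OF that(1)] ksc[OF that(2)] unit unit_scale[OF ip1] that by metis
  qed
  obtain e :: 'v where e: "e \<noteq> 0"
    using nonempty_Basis zero_not_in_Basis by blast
  define h where "h = k e"
  have hpos: "h > 0" unfolding h_def k_def using posd[OF ip1 e] posd[OF ip2 e] by simp
  have diag: "g2 v v = h * g1 v v" for v
  proof (cases "v = 0")
    case True then show ?thesis by (simp add: ipsimps[OF ip1] ipsimps[OF ip2])
  next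
    case False
    have "k v = h" using keq[OF False e] h_def by simp
    thus ?thesis using posd[OF ip1 False] by (simp add: k_def field_simps)
  qed
  have "g2 v w = h * g1 v w" for v w
    using prop_from_diag[OF ip1 ip2 diag] .
  thus ?thesis using hpos by blast
qed

lemma angle_to_perp:
  fixes g1 g2 :: "'v::real_vector \<Rightarrow> 'v \<Rightarrow> real"
  assumes ip1: "inner_product_on g1" and ip2: "inner_product_on g2"
    and th: "0 < \<theta>" "\<theta> < pi"
    and C5: "\<forall>v w. v \<noteq> 0 \<longrightarrow> w \<noteq> 0 \<longrightarrow> (ip_angle g1 v w = \<theta> \<longleftrightarrow> ip_angle g2 v w = \<theta>)"
    and v: "v \<noteq> 0" and w: "w \<noteq> 0" and orth: "g1 v w = 0"
  shows "g2 v w = 0"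
proof -
  define a where "a = 1/sqrt (g1 v v)"
  define b where "b = 1/sqrt (g1 w w)"
  have a0: "a > 0" "b > 0" using posd[OF ip1 v] posd[OF ip1 w] by (simp_all add: a_def b_def)
  define v' where "v' = a *\<^sub>R v"
  define w' where "w' = b *\<^sub>R w"
  have n1: "g1 v' v' = 1" "g1 w' w' = 1" using unit_scale[OF ip1 v] unit_scale[OF ip1 w]
    by (simp_all add: v'_def w'_def a_def b_def)
  have o': "g1 v' w' = 0" by (simp add: v'_def w'_def ipsimps[OF ip1] orth)
  have v'0: "v' \<noteq> 0" using nz_of_pos[OF ip1] n1 by simp
  define cc where "cc = cos \<theta>"
  define sn where "sn = sin \<theta>"
  have sn0: "sn > 0" unfolding sn_def using th sin_gt_zero by blast
  have cs: "cc^2 + sn^2 = 1" unfolding cc_def sn_def by simp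
  define \<alpha> where "\<alpha> = g2 v' v'"
  define \<beta> where "\<beta> = g2 v' w'"
  define \<gamma> where "\<gamma> = g2 w' w'"
  have \<alpha>0: "\<alpha> > 0" unfolding \<alpha>_def using posd[OF ip2 v'0] .
  have key: "(cc*\<alpha> + \<sigma>*\<beta>)^2 = cc^2 * \<alpha> * (cc^2*\<alpha> + 2*cc*\<sigma>*\<beta> + \<sigma>^2*\<gamma>)"
    if sig: "\<sigma> = sn \<or> \<sigma> = -sn" for \<sigma>
  proof -
    define x where "x = cc *\<^sub>R v' + \<sigma> *\<^sub>R w'"
    have g1x: "g1 x x = 1" using n1 o' cs sig
      by (auto simp: x_def ipsimps[OF ip1] symm[OF ip1, of w' v'] power2_eq_square algebra_simps)
    have x0: "x \<noteq> 0" using nz_of_pos[OF ip1] g1x by simp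
    have g1vx: "g1 v' x = cc" using n1 o' by (simp add: x_def ipsimps[OF ip1])
    have "ip_angle g1 v' x = \<theta>"
      using angle_eq[OF ip1, of \<theta> v' x] th g1x g1vx n1 cc_def by simp
    hence "ip_angle g2 v' x = \<theta>" using C5 v'0 x0 by blast
    hence r: "g2 v' x / (sqrt \<alpha> * sqrt (g2 x x)) = cc"
      using angle_eq[OF ip2, of \<theta> v' x] th cc_def \<alpha>_def by simp
    have px: "g2 x x > 0" using posd[OF ip2 x0] .
    have "g2 v' x = cc * (sqrt \<alpha> * sqrt (g2 x x))" using r \<alpha>0 px by (simp add: field_simps)
    hence "(g2 v' x)^2 = cc^2 * \<alpha> * g2 x x" using \<alpha>0 px
      by (simp add: power_mult_distrib)
    moreover have "g2 v' x = cc*\<alpha> + \<sigma>*\<beta>" by (simp add: x_def ipsimps[OF ip2] \<alpha>_def \<beta>_def)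
    moreover have "g2 x x = cc^2*\<alpha> + 2*cc*\<sigma>*\<beta> + \<sigma>^2*\<gamma>"
      by (simp add: x_def ipsimps[OF ip2] \<alpha>_def \<beta>_def \<gamma>_def symm[OF ip2, of w' v'] power2_eq_square algebra_simps)
    ultimately show ?thesis by simp
  qed
  have E1: "(cc*\<alpha> + sn*\<beta>)^2 = cc^2 * \<alpha> * (cc^2*\<alpha> + 2*cc* sn*\<beta> + sn^2*\<gamma>)" by (rule key) simp
  have E2: "(cc*\<alpha> + (-sn)*\<beta>)^2 = cc^2 * \<alpha> * (cc^2*\<alpha> + 2*cc*(-sn)*\<beta> + (-sn)^2*\<gamma>)" by (rule key) simp
  have D: "4*cc* sn*\<alpha>*\<beta>*(1 - cc^2) = 0" using E1 E2 by algebra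
  have S: "2* sn^2*\<beta>^2 = 2*cc^2*\<alpha>*(cc^2*\<alpha> + sn^2*\<gamma>) - 2*cc^2*\<alpha>^2"
    using E1 E2 by algebra
  have b0: "\<beta> = 0"
  proof (cases "cc = 0")
    case True
    then show ?thesis using S sn0 by simp
  next
    case False
    have "1 - cc^2 = sn^2" using cs by simp
    hence "1 - cc^2 \<noteq> 0" using sn0 by simp
    thus ?thesis using D False sn0 \<alpha>0 by simp
  qed
  have "\<beta> = a * b * g2 v w" by (simp add: \<beta>_def v'_def w'_def ipsimps[OF ip2])
  thus ?thesis using b0 a0 by simp
qed


theorem mainTheorem12:
  fixes g1 g2 :: "'m \<Rightarrow> 'v::euclidean_space \<Rightarrow> 'v \<Rightarrow> real"
  assumes "pointwise_metric g1" and "pointwise_metric g2"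
  defines "C1 \<equiv> (\<exists>h::'m \<Rightarrow> real. (\<forall>p. h p > 0) \<and> (\<forall>p v w. g2 p v w = h p * g1 p v w))"
      and "C2 \<equiv> (\<exists>f::'m \<Rightarrow> real. (\<forall>p. f p > 0) \<and>
                   (\<forall>p v. ip_norm (g1 p) v = f p * ip_norm (g2 p) v))"
      and "C3 \<equiv> (\<forall>p v w. v \<noteq> 0 \<longrightarrow> w \<noteq> 0 \<longrightarrow> ip_angle (g1 p) v w = ip_angle (g2 p) v w)"
      and "C4 \<equiv> (\<forall>p v w. v \<noteq> 0 \<longrightarrow> w \<noteq> 0 \<longrightarrow> (g1 p v w = 0 \<longleftrightarrow> g2 p v w = 0))"
      and "C5 \<equiv> (\<forall>p. \<exists>\<theta>0. 0 < \<theta>0 \<and> \<theta>0 < pi \<and>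
                   (\<forall>v w. v \<noteq> 0 \<longrightarrow> w \<noteq> 0 \<longrightarrow>
                      (ip_angle (g1 p) v w = \<theta>0 \<longleftrightarrow> ip_angle (g2 p) v w = \<theta>0)))"
  shows "(C1 \<longleftrightarrow> C2) \<and> (C2 \<longleftrightarrow> C3) \<and> (C3 \<longleftrightarrow> C4) \<and> (C4 \<longleftrightarrow> C5)"
proof -
  have ip1: "inner_product_on (g1 p)" for p using assms(1) unfolding pointwise_metric_def by blast
  have ip2: "inner_product_on (g2 p)" for p using assms(2) unfolding pointwise_metric_def by blast
  have 12: "C2" if "C1"
  proof -
    obtain h where h: "\<forall>p. h p > 0" "\<forall>p v w. g2 p v w = h p * g1 p v w" using \<open>C1\<close> C1_def by blast
    have "ip_norm (g1 p) v = (1 / sqrt (h p)) * ip_norm (g2 p) v" for p v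
    proof -
      have "ip_norm (g2 p) v = sqrt (h p) * ip_norm (g1 p) v"
        unfolding ip_norm_def h(2)[rule_format] by (simp add: real_sqrt_mult)
      thus ?thesis using h(1)[rule_format, of p] by simp
    qed
    thus ?thesis unfolding C2_def using h(1) by (intro exI[of _ "\<lambda>p. 1 / sqrt (h p)"]) auto
  qed
  have 21: "C1" if "C2"
  proof -
    obtain f where f: "\<forall>p. f p > 0" "\<forall>p v. ip_norm (g1 p) v = f p * ip_norm (g2 p) v"
      using \<open>C2\<close> C2_def by blast
    have diag: "g2 p v v = (1 / (f p)^2) * g1 p v v" for p v
    proof -
      have "sqrt (g1 p v v) = f p * sqrt (g2 p v v)" using f(2) unfolding ip_norm_def by blast
      hence "(sqrt (g1 p v v))^2 = (f p)^2 * (sqrt (g2 p v v))^2" by (simp add: power_mult_distrib)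
      hence "g1 p v v = (f p)^2 * g2 p v v" using nonneg[OF ip1] nonneg[OF ip2] by simp
      thus ?thesis using f(1)[rule_format, of p] by (simp add: field_simps)
    qed
    have "g2 p v w = (1 / (f p)^2) * g1 p v w" for p v w
      using prop_from_diag[OF ip1 ip2 diag] .
    thus ?thesis unfolding C1_def using f(1) by (intro exI[of _ "\<lambda>p. 1 / (f p)^2"]) (auto, metis less_irrefl)
  qed
  have 13: "C3" if "C1"
  proof -
    obtain h where h: "\<forall>p. h p > 0" "\<forall>p v w. g2 p v w = h p * g1 p v w" using \<open>C1\<close> C1_def by blast
    have "ip_angle (g1 p) v w = ip_angle (g2 p) v w" for p v w
    proof -
      have hh: "sqrt (h p) * sqrt (h p) = h p" "sqrt (h p) > 0" using h(1)[rule_format, of p] by simp_all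
      have "h p * g1 p v w / (sqrt (h p * g1 p v v) * sqrt (h p * g1 p w w))
          = g1 p v w / (sqrt (g1 p v v) * sqrt (g1 p w w))"
      proof -
        have "sqrt (h p * g1 p v v) * sqrt (h p * g1 p w w)
            = (sqrt (h p) * sqrt (h p)) * (sqrt (g1 p v v) * sqrt (g1 p w w))"
          unfolding real_sqrt_mult by (simp only: ac_simps)
        also have "\<dots> = h p * (sqrt (g1 p v v) * sqrt (g1 p w w))" using hh by simp
        finally show ?thesis using hh by simp
      qed
      thus ?thesis unfolding ip_angle_def h(2)[rule_format] by simp
    qed
    thus ?thesis unfolding C3_def by blast
  qed
  have 34: "C4" if "C3"
    using \<open>C3\<close> angle_perp[OF ip1] angle_perp[OF ip2] unfolding C3_def C4_def by metis
  have 41: "C1" if "C4"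
  proof -
    have "\<forall>p. \<exists>h>0. \<forall>v w. g2 p v w = h * g1 p v w"
      using perp_to_prop[OF ip1 ip2] \<open>C4\<close> unfolding C4_def by blast
    then obtain h where "\<forall>p. h p > 0 \<and> (\<forall>v w. g2 p v w = h p * g1 p v w)" by metis
    thus ?thesis unfolding C1_def by blast
  qed
  have 35: "C5" if "C3"
    using \<open>C3\<close> unfolding C3_def C5_def
    by (intro allI exI[of _ "pi/2"]) (auto simp: pi_gt_zero)
  have 54: "C4" if "C5"
  proof -
    have "g1 p v w = 0 \<longleftrightarrow> g2 p v w = 0" if "v \<noteq> 0" "w \<noteq> 0" for p v w
    proof -
      obtain \<theta> where th: "0 < \<theta>" "\<theta> < pi"
        "\<forall>v w. v \<noteq> 0 \<longrightarrow> w \<noteq> 0 \<longrightarrow> (ip_angle (g1 p) v w = \<theta> \<longleftrightarrow> ip_angle (g2 p) v w = \<theta>)"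
        using \<open>C5\<close> unfolding C5_def by blast
      have th': "\<forall>v w. v \<noteq> 0 \<longrightarrow> w \<noteq> 0 \<longrightarrow> (ip_angle (g2 p) v w = \<theta> \<longleftrightarrow> ip_angle (g1 p) v w = \<theta>)"
        using th(3) by blast
      show ?thesis
        using angle_to_perp[OF ip1 ip2 th(1,2) th(3) that]
              angle_to_perp[OF ip2 ip1 th(1,2) th' that] by blast
    qed
    thus ?thesis unfolding C4_def by blast
  qed
  show ?thesis using 12 21 13 34 41 35 54 by blast
qed

end
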